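(* For every $k\ge1$, the friendship graph $K_1\vee kK_2$ is determined by its $A_\alpha$-spectrum for every $\alpha\in(1/2,1)$.
   Context: All graphs are finite, simple and undirected. $A_\alpha(G)=\alpha D(G)+(1-\alpha)A(G)$ with $A(G)$ the adjacency and $D(G)$ the degree matrix. A graph is determined by its $A_\alpha$-spectrum if every graph whose $A_\alpha$ matrix has the same multiset of eigenvalues is isomorphic to it. $kK_2$ is the disjoint union of $k$ edges and $\vee$ is the join (disjoint union plus all edges between the two vertex sets); $K_1\vee kK_2$ is the friendship graph. *)

theory Defs
  imports "Jordan_Normal_Form.Char_Poly"
begin

definition simple_graph :: "nat \<Rightarrow> (nat \<Rightarrow> nat \<Rightarrow> bool) \<Rightarrow> bool" where
  "simple_graph n E \<longleftrightarrow> (\<forall>i j. E i j \<longrightarrow> i < n \<and> j < n \<and> i \<noteq> j \<and> E j i)"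

definition degree :: "nat \<Rightarrow> (nat \<Rightarrow> nat \<Rightarrow> bool) \<Rightarrow> nat \<Rightarrow> nat" where
  "degree n E i = card {j. j < n \<and> E i j}"

definition adj_matrix :: "nat \<Rightarrow> (nat \<Rightarrow> nat \<Rightarrow> bool) \<Rightarrow> real mat" where
  "adj_matrix n E = mat n n (\<lambda>(i, j). if E i j then 1 else 0)"

definition deg_matrix :: "nat \<Rightarrow> (nat \<Rightarrow> nat \<Rightarrow> bool) \<Rightarrow> real mat" where
  "deg_matrix n E = mat n n (\<lambda>(i, j). if i = j then real (degree n E i) else 0)"

definition A_alpha :: "real \<Rightarrow> nat \<Rightarrow> (nat \<Rightarrow> nat \<Rightarrow> bool) \<Rightarrow> real mat" where
  "A_alpha \<alpha> n E = \<alpha> \<cdot>\<^sub>m deg_matrix n E + (1 - \<alpha>) \<cdot>\<^sub>m adj_matrix n E"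

definition A_alpha_spectrum :: "real \<Rightarrow> nat \<Rightarrow> (nat \<Rightarrow> nat \<Rightarrow> bool) \<Rightarrow> complex multiset" where
  "A_alpha_spectrum \<alpha> n E = proots (char_poly (map_mat complex_of_real (A_alpha \<alpha> n E)))"

definition graph_iso :: "nat \<Rightarrow> (nat \<Rightarrow> nat \<Rightarrow> bool) \<Rightarrow> nat \<Rightarrow> (nat \<Rightarrow> nat \<Rightarrow> bool) \<Rightarrow> bool" where
  "graph_iso n E m F \<longleftrightarrow> (\<exists>f. bij_betw f {0..<n} {0..<m} \<and>
      (\<forall>i<n. \<forall>j<n. E i j \<longleftrightarrow> F (f i) (f j)))"

definition determined_by_A_alpha_spectrum :: "real \<Rightarrow> nat \<Rightarrow> (nat \<Rightarrow> nat \<Rightarrow> bool) \<Rightarrow> bool" where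
  "determined_by_A_alpha_spectrum \<alpha> n E \<longleftrightarrow>
     (\<forall>m F. simple_graph m F \<and> A_alpha_spectrum \<alpha> m F = A_alpha_spectrum \<alpha> n E
        \<longrightarrow> graph_iso m F n E)"

text \<open>Friendship graph K_1 join kK_2 on {0..<2k+1}: vertex 0 is the centre,
  the edges of kK_2 are {2a+1, 2a+2} for a < k.\<close>
definition friendship :: "nat \<Rightarrow> nat \<Rightarrow> nat \<Rightarrow> bool" where
  "friendship k i j \<longleftrightarrow> i < 2*k+1 \<and> j < 2*k+1 \<and> i \<noteq> j \<and>
     (i = 0 \<or> j = 0 \<or> (i - 1) div 2 = (j - 1) div 2)"

end

theory Submission
  imports Defs "Jordan_Normal_Form.Schur_Decomposition"
begin


definition tr :: "'a::comm_ring_1 mat \<Rightarrow> 'a" where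
  "tr A = (\<Sum>i<dim_row A. A $$ (i,i))"

lemma tr_comm:
  assumes A: "A \<in> carrier_mat n m" and B: "B \<in> carrier_mat m n"
  shows "tr (A * B) = tr (B * A)"
proof -
  have "tr (A * B) = (\<Sum>i<n. \<Sum>j<m. A $$ (i,j) * B $$ (j,i))"
    using A B by (auto simp: tr_def scalar_prod_def intro!: sum.cong sum.reindex_bij_witness[of _ id id])
  also have "\<dots> = (\<Sum>j<m. \<Sum>i<n. B $$ (j,i) * A $$ (i,j))"
    by (subst sum.swap) (simp add: mult.commute)
  also have "\<dots> = tr (B * A)"
    using A B by (auto simp: tr_def scalar_prod_def intro!: sum.cong sum.reindex_bij_witness[of _ id id])
  finally show ?thesis .
qed

lemma ut_pow: fixes B :: "'a::comm_ring_1 mat"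
  assumes B: "B \<in> carrier_mat n n" and ut: "upper_triangular B"
  shows "upper_triangular (B ^\<^sub>m k) \<and> (\<forall>i<n. (B ^\<^sub>m k) $$ (i,i) = B $$ (i,i) ^ k)"
proof (induction k)
  case 0
  then show ?case using B by auto
next
  case (Suc k)
  let ?X = "B ^\<^sub>m k"
  have X: "?X \<in> carrier_mat n n" using B by simp
  have utX: "upper_triangular ?X" and dX: "\<And>i. i<n \<Longrightarrow> ?X $$ (i,i) = B $$ (i,i) ^ k"
    using Suc by auto
  have ent: "(?X * B) $$ (i,j) = (\<Sum>l<n. ?X $$ (i,l) * B $$ (l,j))" if "i<n" "j<n" for i j
    using X B that by (auto simp: scalar_prod_def intro!: sum.cong sum.reindex_bij_witness[of _ id id])
  have ut2: "upper_triangular (?X * B)"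
  proof (rule upper_triangularI)
    fix i j assume ji: "j < i" and i: "i < dim_row (?X * B)"
    hence i': "i < n" using B by simp
    have "(?X * B) $$ (i,j) = (\<Sum>l<n. ?X $$ (i,l) * B $$ (l,j))" using ent i' ji by simp
    also have "\<dots> = 0"
    proof (rule sum.neutral, intro ballI)
      fix l assume l: "l \<in> {..<n}"
      show "?X $$ (i,l) * B $$ (l,j) = 0"
      proof (cases "l < i")
        case True then show ?thesis using utX i' X by (auto dest: upper_triangularD)
      next
        case False then have "j < l" using ji by simp
        then show ?thesis using ut l B by (auto dest: upper_triangularD)
      qed
    qed
    finally show "(?X * B) $$ (i,j) = 0" .
  qed
  have diag: "(?X * B) $$ (i,i) = B $$ (i,i) ^ Suc k" if i: "i < n" for i
  proof -
    have "(?X * B) $$ (i,i) = (\<Sum>l<n. ?X $$ (i,l) * B $$ (l,i))" using ent i by simp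
    also have "\<dots> = ?X $$ (i,i) * B $$ (i,i)"
    proof -
      have "(\<Sum>l<n. ?X $$ (i,l) * B $$ (l,i)) = ?X $$ (i,i) * B $$ (i,i) + (\<Sum>l\<in>{..<n}-{i}. ?X $$ (i,l) * B $$ (l,i))"
        using i by (subst sum.remove[of _ i]) auto
      also have "(\<Sum>l\<in>{..<n}-{i}. ?X $$ (i,l) * B $$ (l,i)) = 0"
      proof (rule sum.neutral, intro ballI)
        fix l assume l: "l \<in> {..<n}-{i}"
        show "?X $$ (i,l) * B $$ (l,i) = 0"
        proof (cases "l < i")
          case True then show ?thesis using utX i X by (auto dest: upper_triangularD)
        next
          case False then have "i < l" using l by auto
          then show ?thesis using ut l B by (auto dest: upper_triangularD)
        qed
      qed
      finally show ?thesis by simp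
    qed
    also have "\<dots> = B $$ (i,i) ^ Suc k" using dX i by (simp add: mult.commute)
    finally show ?thesis .
  qed
  show ?case using ut2 diag by simp
qed

lemma spectrum_traces:
  fixes A :: "complex mat"
  assumes A: "A \<in> carrier_mat n n"
  shows "size (proots (char_poly A)) = n \<and>
         (\<forall>k. tr (A ^\<^sub>m k) = (\<Sum>x\<in>#proots (char_poly A). x ^ k))"
proof -
  obtain as where cp: "char_poly A = (\<Prod>a\<leftarrow>as. [:- a, 1:])" and len: "length as = n"
    using char_poly_factorized[OF A] by blast
  have pr: "proots (char_poly A) = mset as"
  proof -
    have "\<And>bs::complex list. proots (\<Prod>a\<leftarrow>bs. [:- a, 1:]) = mset bs \<and> (\<Prod>a\<leftarrow>bs. [:- a, 1:]) \<noteq> 0"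
    proof -
      fix bs :: "complex list"
      show "proots (\<Prod>a\<leftarrow>bs. [:- a, 1:]) = mset bs \<and> (\<Prod>a\<leftarrow>bs. [:- a, 1:]) \<noteq> 0"
      proof (induction bs)
        case Nil then show ?case by simp
      next
        case (Cons a bs)
        let ?r = "\<Prod>a\<leftarrow>bs. [:- a, 1:]"
        have l: "[:- a, 1:] \<noteq> 0" by simp
        have "proots ([:- a, 1:] * ?r) = proots [:- a, 1:] + proots ?r"
          using Cons l by (intro proots_mult) auto
        moreover have "proots [:- a, 1:] = {#a#}" using proots_linear_factor[of "-a"] by simp
        moreover have "[:- a, 1:] * ?r \<noteq> 0" using Cons.IH l by (metis no_zero_divisors)
        moreover have "(\<Prod>a\<leftarrow>a#bs. [:- a, 1:]) = [:- a, 1:] * ?r" by (simp only: prod_list.Cons list.map)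
        ultimately show ?case using Cons.IH by (metis add_mset_add_single mset.simps(2) union_commute)
      qed
    qed
    then show ?thesis unfolding cp by simp
  qed
  obtain B P Q where sd: "schur_decomposition A as = (B,P,Q)" by (cases "schur_decomposition A as") auto
  from schur_decomposition[OF A cp sd] have wit: "similar_mat_wit A B P Q"
    and ut: "upper_triangular B" and dg: "diag_mat B = as" by auto
  from wit A have B: "B \<in> carrier_mat n n" and P: "P \<in> carrier_mat n n" and Q: "Q \<in> carrier_mat n n"
    and QP: "Q * P = 1\<^sub>m n"
    unfolding similar_mat_wit_def Let_def by auto
  have Bd: "B $$ (i,i) = as ! i" if "i < n" for i
    using dg that B unfolding diag_mat_def by auto
  have "tr (A ^\<^sub>m k) = (\<Sum>x\<in>#mset as. x ^ k)" for k
  proof -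
    have "A ^\<^sub>m k = P * B ^\<^sub>m k * Q" by (rule similar_mat_wit_pow_id[OF wit])
    also have "\<dots> = P * (B ^\<^sub>m k * Q)" using P B Q by (simp add: assoc_mult_mat[of _ n n _ n _ n])
    finally have "tr (A ^\<^sub>m k) = tr ((B ^\<^sub>m k * Q) * P)"
      using tr_comm[OF P mult_carrier_mat[OF pow_carrier_mat[OF B] Q]] by simp
    also have "(B ^\<^sub>m k * Q) * P = B ^\<^sub>m k"
      using B Q P QP by (simp add: assoc_mult_mat[of _ n n _ n _ n])
    also have "tr (B ^\<^sub>m k) = (\<Sum>i<n. (as ! i) ^ k)"
      unfolding tr_def using ut_pow[OF B ut, of k] B Bd by (intro sum.cong) auto
    also have "\<dots> = (\<Sum>x\<in>#mset as. x ^ k)"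
    proof -
      have "(\<Sum>x\<in>#mset as. x ^ k) = sum_list (map (\<lambda>x. x ^ k) as)" by (induction as) auto
      also have "\<dots> = (\<Sum>i<length as. (as ! i) ^ k)" by (simp add: sum_list_sum_nth atLeast0LessThan)
      finally show ?thesis using len by simp
    qed
    finally show ?thesis .
  qed
  then show ?thesis using pr len by simp
qed

lemma A_alpha_carrier: "A_alpha a n E \<in> carrier_mat n n"
  unfolding A_alpha_def deg_matrix_def adj_matrix_def by auto

lemma tr_of_real: assumes "X \<in> carrier_mat n n"
  shows "tr (map_mat complex_of_real X) = complex_of_real (tr X)"
  using assms unfolding tr_def by (auto simp: of_real_sum intro!: sum.cong)

lemma cospectral_traces:
  assumes "A_alpha_spectrum a m F = A_alpha_spectrum a n E"
  shows "m = n \<and> (\<forall>k. tr (A_alpha a m F ^\<^sub>m k) = tr (A_alpha a n E ^\<^sub>m k))"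
proof -
  let ?C = "\<lambda>m F. map_mat complex_of_real (A_alpha a m F)"
  have C: "\<And>m F. ?C m F \<in> carrier_mat m m" using A_alpha_carrier by auto
  have key: "\<And>m F k. complex_of_real (tr (A_alpha a m F ^\<^sub>m k)) = (\<Sum>x\<in>#A_alpha_spectrum a m F. x ^ k)"
  proof -
    fix m F k
    have "complex_of_real (tr (A_alpha a m F ^\<^sub>m k)) = tr (map_mat complex_of_real (A_alpha a m F ^\<^sub>m k))"
      by (rule tr_of_real[OF pow_carrier_mat[OF A_alpha_carrier], symmetric])
    also have "map_mat complex_of_real (A_alpha a m F ^\<^sub>m k) = (?C m F) ^\<^sub>m k"
      by (rule of_real_hom.mat_hom_pow[OF A_alpha_carrier])
    also have "tr \<dots> = (\<Sum>x\<in>#A_alpha_spectrum a m F. x ^ k)"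
      using spectrum_traces[OF C[of m F]] unfolding A_alpha_spectrum_def by blast
    finally show "complex_of_real (tr (A_alpha a m F ^\<^sub>m k)) = (\<Sum>x\<in>#A_alpha_spectrum a m F. x ^ k)" .
  qed
  have "size (A_alpha_spectrum a m F) = m" "size (A_alpha_spectrum a n E) = n"
    using spectrum_traces[OF C[of m F]] spectrum_traces[OF C[of n E]] unfolding A_alpha_spectrum_def by auto
  then have "m = n" using assms by simp
  moreover have "tr (A_alpha a m F ^\<^sub>m k) = tr (A_alpha a n E ^\<^sub>m k)" for k
    using key[of m F k] key[of n E k] assms of_real_eq_iff by metis
  ultimately show ?thesis by blast
qed



locale wgraph =
  fixes n :: nat and d :: "nat \<Rightarrow> real" and e :: "nat \<Rightarrow> nat \<Rightarrow> real" and al be :: real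
  assumes e_irr: "\<And>i. e i i = 0"
    and e_sym: "\<And>i j. e i j = e j i"
    and e_idem: "\<And>i j. e i j * e i j = e i j"
    and d_def: "\<And>i. d i = (\<Sum>j<n. e i j)"
begin

definition a :: "nat \<Rightarrow> nat \<Rightarrow> real" where
  "a i j = al * (if i = j then d i else 0) + be * e i j"

definition c :: "nat \<Rightarrow> nat \<Rightarrow> real" where
  "c j i = (\<Sum>l<n. e j l * e l i)"

lemma row: assumes "i < n"
  shows "(\<Sum>l<n. a i l * h l) = al * d i * h i + be * (\<Sum>l<n. e i l * h l)"
proof -
  have "(\<Sum>l<n. a i l * h l) = (\<Sum>l<n. al * ((if i = l then d i else 0) * h l)) + (\<Sum>l<n. be * (e i l * h l))"
    unfolding a_def by (simp add: algebra_simps sum.distrib)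
  also have "(\<Sum>l<n. al * ((if i = l then d i else 0) * h l)) = (\<Sum>l<n. if l = i then al * d i * h i else 0)"
    by (intro sum.cong) auto
  also have "\<dots> = al * d i * h i" using assms by (simp add: sum.delta)
  finally show ?thesis by (simp add: sum_distrib_left)
qed

lemma col: assumes "i < n"
  shows "(\<Sum>l<n. h l * a l i) = al * d i * h i + be * (\<Sum>l<n. h l * e l i)"
proof -
  have "(\<Sum>l<n. h l * a l i) = (\<Sum>l<n. al * ((if l = i then d l else 0) * h l)) + (\<Sum>l<n. be * (h l * e l i))"
    unfolding a_def by (simp add: algebra_simps sum.distrib)
  also have "(\<Sum>l<n. al * ((if l = i then d l else 0) * h l)) = (\<Sum>l<n. if l = i then al * d i * h i else 0)"
    by (intro sum.cong) auto
  also have "\<dots> = al * d i * h i" using assms by (simp add: sum.delta)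
  finally show ?thesis by (simp add: sum_distrib_left)
qed

lemma cii: "c i i = d i"
  unfolding c_def d_def by (intro sum.cong) (auto simp: e_sym[of _ i] e_idem)

lemma sum_e_d: "(\<Sum>i<n. \<Sum>j<n. e i j * d j) = (\<Sum>j<n. d j * d j)"
proof -
  have "(\<Sum>i<n. \<Sum>j<n. e i j * d j) = (\<Sum>j<n. \<Sum>i<n. e j i * d j)"
    by (subst sum.swap) (simp add: e_sym)
  also have "\<dots> = (\<Sum>j<n. d j * d j)"
    by (simp add: d_def sum_distrib_right)
  finally show ?thesis .
qed

lemma tr1: "(\<Sum>i<n. a i i) = al * (\<Sum>i<n. d i)"
  by (simp add: a_def e_irr sum_distrib_left)

lemma tr2: "(\<Sum>i<n. \<Sum>j<n. a i j * a j i) = al^2 * (\<Sum>i<n. d i ^ 2) + be^2 * (\<Sum>i<n. d i)"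
proof -
  have "(\<Sum>j<n. a i j * a j i) = al^2 * d i ^ 2 + be^2 * d i" if "i < n" for i
  proof -
    have "(\<Sum>j<n. a i j * a j i) = al * d i * a i i + be * (\<Sum>j<n. e i j * a j i)"
      by (rule row[OF that])
    also have "(\<Sum>j<n. e i j * a j i) = al * d i * e i i + be * (\<Sum>j<n. e i j * e j i)"
      by (rule col[OF that])
    also have "(\<Sum>j<n. e i j * e j i) = d i" using cii unfolding c_def .
    finally show ?thesis by (simp add: a_def e_irr power2_eq_square algebra_simps)
  qed
  then have "(\<Sum>i<n. \<Sum>j<n. a i j * a j i) = (\<Sum>i<n. al^2 * d i ^ 2 + be^2 * d i)" by simp
  then show ?thesis by (simp add: sum.distrib sum_distrib_left)
qed

definition T :: real where "T = (\<Sum>i<n. \<Sum>j<n. \<Sum>l<n. e i j * e j l * e l i)"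

lemma tr3: "(\<Sum>i<n. \<Sum>j<n. \<Sum>l<n. a i j * a j l * a l i)
   = al^3 * (\<Sum>i<n. d i ^ 3) + 3 * al * be^2 * (\<Sum>i<n. d i ^ 2) + be^3 * T"
proof -
  define g where "g j i = (\<Sum>l<n. a j l * a l i)" for j i
  have g: "g j i = al * d j * a j i + be * (al * d i * e j i + be * c j i)" if "j < n" "i < n" for i j
  proof -
    have "g j i = al * d j * a j i + be * (\<Sum>l<n. e j l * a l i)" unfolding g_def by (rule row[OF that(1)])
    also have "(\<Sum>l<n. e j l * a l i) = al * d i * e j i + be * c j i" unfolding c_def by (rule col[OF that(2)])
    finally show ?thesis .
  qed
  have inner: "(\<Sum>j<n. \<Sum>l<n. a i j * a j l * a l i) = 
     al * d i * (al^2 * d i^2 + be^2 * d i) + be * (al*be * (\<Sum>j<n. e i j * d j) + al*be* d i^2 + be^2 * (\<Sum>j<n. e i j * c j i))"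
    if i: "i < n" for i
  proof -
    have "(\<Sum>j<n. \<Sum>l<n. a i j * a j l * a l i) = (\<Sum>j<n. a i j * g j i)"
      unfolding g_def by (simp add: sum_distrib_left mult.assoc)
    also have "\<dots> = al * d i * g i i + be * (\<Sum>j<n. e i j * g j i)" by (rule row[OF i])
    also have "g i i = al^2 * d i^2 + be^2 * d i"
      using g[OF i i] cii by (simp add: a_def e_irr power2_eq_square algebra_simps)
    also have "(\<Sum>j<n. e i j * g j i) = (\<Sum>j<n. al*be * (e i j * d j) + al*be * (d i * e i j) + be^2 * (e i j * c j i))"
    proof (rule sum.cong[OF refl])
      fix j assume j: "j \<in> {..<n}"
      have "e i j * a j i = be * e i j"
      proof (cases "i = j")
        case True then show ?thesis by (simp add: e_irr)
      next
        case False
        then have "a j i = be * e i j" by (simp add: a_def e_sym[of j i])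
        then show ?thesis by (simp add: e_idem mult.left_commute)
      qed
      note h1 = this
      have h2: "e i j * e j i = e i j" by (simp add: e_sym[of j i] e_idem)
      have "e i j * g j i = al * d j * (e i j * a j i) + be * (al * d i * (e i j * e j i) + be * (e i j * c j i))"
        using g[OF _ i, of j] j by (simp add: algebra_simps)
      also have "\<dots> = al * d j * (be * e i j) + be * (al * d i * e i j + be * (e i j * c j i))"
        by (simp only: h1 h2)
      finally show "e i j * g j i = al*be * (e i j * d j) + al*be * (d i * e i j) + be^2 * (e i j * c j i)"
        by (simp add: algebra_simps power2_eq_square)
    qed
    also have "\<dots> = al*be * (\<Sum>j<n. e i j * d j) + al*be * d i^2 + be^2 * (\<Sum>j<n. e i j * c j i)"
      by (simp add: sum.distrib sum_distrib_left d_def power2_eq_square)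
    finally show ?thesis .
  qed
  have "(\<Sum>i<n. \<Sum>j<n. \<Sum>l<n. a i j * a j l * a l i) = (\<Sum>i<n. 
     al * d i * (al^2 * d i^2 + be^2 * d i) + be * (al*be * (\<Sum>j<n. e i j * d j) + al*be* d i^2 + be^2 * (\<Sum>j<n. e i j * c j i)))"
    using inner by simp
  also have "\<dots> = al^3 * (\<Sum>i<n. d i ^ 3) + al*be^2 * (\<Sum>i<n. d i ^ 2) + al*be^2 * (\<Sum>i<n. \<Sum>j<n. e i j * d j)
      + al*be^2 * (\<Sum>i<n. d i ^ 2) + be^3 * (\<Sum>i<n. \<Sum>j<n. e i j * c j i)"
    by (simp add: sum.distrib sum_distrib_left algebra_simps power2_eq_square power3_eq_cube)
  also have "(\<Sum>i<n. \<Sum>j<n. e i j * d j) = (\<Sum>i<n. d i ^ 2)" using sum_e_d by (simp add: power2_eq_square)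
  also have "(\<Sum>i<n. \<Sum>j<n. e i j * c j i) = T"
    unfolding T_def c_def by (simp add: sum_distrib_left mult.assoc)
  finally show ?thesis by simp
qed

end


lemma mult_entry:
  assumes "A \<in> carrier_mat n n" "B \<in> carrier_mat n n" "i < n" "j < n"
  shows "(A * B) $$ (i,j) = (\<Sum>l<n. A $$ (i,l) * B $$ (l,j))"
  using assms by (auto simp: scalar_prod_def intro!: sum.reindex_bij_witness[of _ id id])

definition tri :: "nat \<Rightarrow> (nat \<Rightarrow> nat \<Rightarrow> bool) \<Rightarrow> real" where
  "tri n E = (\<Sum>i<n. \<Sum>j<n. \<Sum>l<n. if E i j \<and> E j l \<and> E l i then 1 else 0)"

definition dg :: "nat \<Rightarrow> (nat \<Rightarrow> nat \<Rightarrow> bool) \<Rightarrow> nat \<Rightarrow> real" where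
  "dg n E i = real (degree n E i)"

lemma degree_sum: "real (degree n E i) = (\<Sum>j<n. if E i j then 1 else 0)"
proof -
  have "{..<n} \<inter> Collect (E i) = {j. j < n \<and> E i j}" by auto
  then show ?thesis unfolding degree_def by (simp add: sum.If_cases)
qed

lemma graph_traces:
  fixes al :: real
  assumes G: "simple_graph n E"
  defines "A \<equiv> A_alpha al n E"
  shows "tr (A ^\<^sub>m 1) = al * (\<Sum>i<n. dg n E i)"
    "tr (A ^\<^sub>m 2) = al^2 * (\<Sum>i<n. dg n E i ^ 2) + (1-al)^2 * (\<Sum>i<n. dg n E i)"
    "tr (A ^\<^sub>m 3) = al^3 * (\<Sum>i<n. dg n E i ^ 3) + 3 * al * (1-al)^2 * (\<Sum>i<n. dg n E i ^ 2) + (1-al)^3 * tri n E"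
proof -
  interpret W: wgraph n "dg n E" "\<lambda>i j. if E i j then 1 else 0" al "1 - al"
  proof
    show "\<And>i. (if E i i then 1 else 0::real) = 0" using G unfolding simple_graph_def by auto
    show "\<And>i j. (if E i j then 1 else 0::real) = (if E j i then 1 else 0)" using G unfolding simple_graph_def by auto
    show "\<And>i j. (if E i j then 1 else 0::real) * (if E i j then 1 else 0) = (if E i j then 1 else 0)" by simp
    show "\<And>i. dg n E i = (\<Sum>j<n. if E i j then 1 else 0)" unfolding dg_def by (rule degree_sum)
  qed
  have Ac: "A \<in> carrier_mat n n" unfolding A_def by (rule A_alpha_carrier)
  have ent: "A $$ (i,j) = W.a i j" if "i < n" "j < n" for i j
    using that unfolding A_def A_alpha_def deg_matrix_def adj_matrix_def W.a_def dg_def by auto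
  have p1: "A ^\<^sub>m 1 = A" using Ac by simp
  have p2: "A ^\<^sub>m 2 = A * A" using Ac by (simp add: numeral_2_eq_2)
  have p3: "A ^\<^sub>m 3 = A * A * A" using Ac by (simp add: numeral_3_eq_3)
  have AA: "A * A \<in> carrier_mat n n" using Ac by simp
  show "tr (A ^\<^sub>m 1) = al * (\<Sum>i<n. dg n E i)"
    unfolding p1 tr_def using Ac ent W.tr1 by simp
  have "tr (A ^\<^sub>m 2) = (\<Sum>i<n. (A * A) $$ (i,i))" unfolding p2 tr_def using Ac by simp
  also have "\<dots> = (\<Sum>i<n. \<Sum>j<n. W.a i j * W.a j i)"
    by (intro sum.cong refl) (simp add: mult_entry[OF Ac Ac] ent)
  finally have "tr (A ^\<^sub>m 2) = (\<Sum>i<n. \<Sum>j<n. W.a i j * W.a j i)" .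
  then show "tr (A ^\<^sub>m 2) = al^2 * (\<Sum>i<n. dg n E i ^ 2) + (1-al)^2 * (\<Sum>i<n. dg n E i)"
    using W.tr2 by simp
  have "tr (A ^\<^sub>m 3) = (\<Sum>i<n. (A * A * A) $$ (i,i))" unfolding p3 tr_def using Ac by simp
  also have "\<dots> = (\<Sum>i<n. \<Sum>l<n. (\<Sum>j<n. W.a i j * W.a j l) * W.a l i)"
    by (intro sum.cong refl) (simp add: mult_entry[OF AA Ac] mult_entry[OF Ac Ac] ent)
  also have "\<dots> = (\<Sum>i<n. \<Sum>l<n. \<Sum>j<n. W.a i j * W.a j l * W.a l i)"
    by (simp add: sum_distrib_right)
  also have "\<dots> = (\<Sum>i<n. \<Sum>j<n. \<Sum>l<n. W.a i j * W.a j l * W.a l i)"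
    by (rule sum.cong[OF refl], rule sum.swap)
  also have "\<dots> = al^3 * (\<Sum>i<n. dg n E i ^ 3) + 3 * al * (1-al)^2 * (\<Sum>i<n. dg n E i ^ 2) + (1-al)^3 * W.T"
    by (rule W.tr3)
  also have "W.T = tri n E" unfolding W.T_def tri_def by (intro sum.cong refl) auto
  finally show "tr (A ^\<^sub>m 3) = al^3 * (\<Sum>i<n. dg n E i ^ 3) + 3 * al * (1-al)^2 * (\<Sum>i<n. dg n E i ^ 2) + (1-al)^3 * tri n E" .
qed



definition pt :: "nat \<Rightarrow> nat" where "pt i = (if odd i then i + 1 else i - 1)"

lemma fr_iff: "friendship k i j \<longleftrightarrow> i < 2*k+1 \<and> j < 2*k+1 \<and> i \<noteq> j \<and> (i = 0 \<or> j = 0 \<or> j = pt i)"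
proof -
  have "i \<noteq> 0 \<Longrightarrow> j \<noteq> 0 \<Longrightarrow> (i \<noteq> j \<and> (i - 1) div 2 = (j - 1) div 2) \<longleftrightarrow> j = pt i"
    unfolding pt_def by presburger
  then show ?thesis unfolding friendship_def by auto
qed

lemma fr_simple: "simple_graph (2*k+1) (friendship k)"
  unfolding simple_graph_def friendship_def by auto

lemma pt_range: "1 \<le> i \<Longrightarrow> i \<le> 2*k \<Longrightarrow> 1 \<le> pt i \<and> pt i \<le> 2*k \<and> pt i \<noteq> i \<and> pt (pt i) = i"
  unfolding pt_def by presburger

lemma pt_pt: "0 < i \<Longrightarrow> pt (pt i) = i" unfolding pt_def by presburger

lemma fr_nb0: "{j. j < 2*k+1 \<and> friendship k 0 j} = {1..2*k}"
  by (auto simp: fr_iff)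

lemma fr_nb: assumes "1 \<le> i" "i \<le> 2*k"
  shows "{j. j < 2*k+1 \<and> friendship k i j} = {0, pt i}"
  using assms pt_range[OF assms] by (auto simp: fr_iff)

lemma fr_deg: "dg (2*k+1) (friendship k) i = (if i = 0 then 2*real k else 2)" if "i < 2*k+1"
proof (cases "i = 0")
  case True then show ?thesis using fr_nb0[of k] unfolding dg_def degree_def by simp
next
  case False
  then have "1 \<le> i" "i \<le> 2*k" using that by auto
  then show ?thesis using False pt_range[of i k] unfolding dg_def degree_def fr_nb[OF \<open>1 \<le> i\<close> \<open>i \<le> 2*k\<close>] by auto
qed

lemma sum_split0: "(\<Sum>i<Suc m. f i) = f 0 + (\<Sum>i\<in>{1..m}. f i)"
  by (simp only: sum.lessThan_Suc_shift One_nat_def sum.atLeast1_atMost_eq)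

lemma fr_sum_pow: "(\<Sum>i<2*k+1. dg (2*k+1) (friendship k) i ^ p) = (2*real k)^p + 2*real k * 2^p"
proof -
  have "(\<Sum>i<2*k+1. dg (2*k+1) (friendship k) i ^ p) = (\<Sum>i<Suc (2*k). (if i = 0 then 2*real k else 2) ^ p)"
    using fr_deg[of _ k] by (intro sum.cong) auto
  also have "\<dots> = (2*k)^p + (\<Sum>i\<in>{1..2*k}. 2 ^ p)" by (subst sum_split0) simp
  finally show ?thesis by simp
qed


definition tv :: "nat \<Rightarrow> (nat \<Rightarrow> nat \<Rightarrow> bool) \<Rightarrow> nat \<Rightarrow> real" where
  "tv n E i = (\<Sum>j<n. \<Sum>l<n. if E i j \<and> E j l \<and> E l i then 1 else 0)"

lemma tri_tv: "tri n E = (\<Sum>i<n. tv n E i)" unfolding tri_def tv_def ..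

lemma card_ind': fixes n :: nat shows "real (card {l. l < n \<and> P l}) = (\<Sum>l<n. if P l then 1 else 0::real)"
proof -
  have "(\<Sum>l<n. if P l then 1 else 0::real) = (\<Sum>l\<in>{x\<in>{..<n}. P x}. 1)"
    using sum.inter_filter[of "{..<n}" "\<lambda>_. 1::real" P] by simp
  also have "{x\<in>{..<n}. P x} = {l. l < n \<and> P l}" by auto
  finally show ?thesis by simp
qed

lemma card_ind: fixes n :: nat shows "(\<Sum>l<n. if P l then 1 else 0::real) = real (card {l. l < n \<and> P l})"
  using card_ind' by metis

lemma tv_nb: "tv n E i = (\<Sum>j\<in>{j. j < n \<and> E i j}. real (card {l. l < n \<and> E j l \<and> E l i}))"
proof -
  have "tv n E i = (\<Sum>j<n. if E i j then real (card {l. l < n \<and> E j l \<and> E l i}) else 0)"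
    unfolding tv_def by (intro sum.cong refl) (auto simp: card_ind)
  also have "\<dots> = (\<Sum>j\<in>{..<n} \<inter> {j. E i j}. real (card {l. l < n \<and> E j l \<and> E l i}))"
    by (simp add: sum.If_cases)
  also have "{..<n} \<inter> {j. E i j} = {j. j < n \<and> E i j}" by auto
  finally show ?thesis .
qed

lemma fr_tv: assumes "i < 2*k+1" shows "tv (2*k+1) (friendship k) i = (if i = 0 then 2*real k else 2)"
proof (cases "i = 0")
  case True
  have "tv (2*k+1) (friendship k) i = (\<Sum>j\<in>{1..2*k}. real (card {l. l < 2*k+1 \<and> friendship k j l \<and> friendship k l 0}))"
    unfolding tv_nb True fr_nb0 ..
  also have "\<dots> = (\<Sum>j\<in>{1..2*k}. 1)"
  proof (rule sum.cong[OF refl])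
    fix j assume j: "j \<in> {1..2*k}"
    then have "{l. l < 2*k+1 \<and> friendship k j l \<and> friendship k l 0} = {pt j}"
      using pt_range[of j k] by (auto simp: fr_iff)
    then show "real (card {l. l < 2*k+1 \<and> friendship k j l \<and> friendship k l 0}) = 1" by simp
  qed
  finally show ?thesis using True by simp
next
  case False
  then have i: "1 \<le> i" "i \<le> 2*k" using assms by auto
  note pr = pt_range[OF i]
  have "tv (2*k+1) (friendship k) i = (\<Sum>j\<in>{0, pt i}. real (card {l. l < 2*k+1 \<and> friendship k j l \<and> friendship k l i}))"
    unfolding tv_nb fr_nb[OF i] ..
  also have "\<dots> = real (card {l. l < 2*k+1 \<and> friendship k 0 l \<and> friendship k l i})
       + real (card {l. l < 2*k+1 \<and> friendship k (pt i) l \<and> friendship k l i})"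
    using pr by simp
  also have "{l. l < 2*k+1 \<and> friendship k 0 l \<and> friendship k l i} = {pt i}"
    using pr i by (auto simp: fr_iff) (metis pt_pt)
  also have "{l. l < 2*k+1 \<and> friendship k (pt i) l \<and> friendship k l i} = {0}"
    using pr i by (auto simp: fr_iff)
  finally show ?thesis using False by simp
qed

lemma fr_tri: "tri (2*k+1) (friendship k) = 6 * real k"
proof -
  have "tri (2*k+1) (friendship k) = (\<Sum>i<Suc (2*k). (if i = 0 then 2*real k else 2))"
    unfolding tri_tv using fr_tv[of _ k] by (intro sum.cong) auto
  also have "\<dots> = 2 * real k + (\<Sum>i\<in>{1..2*k}. 2)" by (subst sum_split0) simp
  finally show ?thesis by simp
qed



definition nb :: "nat \<Rightarrow> (nat \<Rightarrow> nat \<Rightarrow> bool) \<Rightarrow> nat \<Rightarrow> nat set" where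
  "nb n E i = {j. j < n \<and> E i j}"

definition Ed :: "nat \<Rightarrow> (nat \<Rightarrow> nat \<Rightarrow> bool) \<Rightarrow> (nat \<times> nat) set" where
  "Ed n E = {(j,l). j < n \<and> l < n \<and> E j l}"

definition Pt :: "nat \<Rightarrow> (nat \<Rightarrow> nat \<Rightarrow> bool) \<Rightarrow> nat \<Rightarrow> (nat \<times> nat) set" where
  "Pt n E i = {(j,l). j < n \<and> l < n \<and> E i j \<and> E j l \<and> E l i}"

lemma fin_nb[simp]: "finite (nb n E i)" unfolding nb_def by auto
lemma fin_Ed[simp]: "finite (Ed n E)"
  by (rule finite_subset[of _ "{..<n} \<times> {..<n}"]) (auto simp: Ed_def)
lemma fin_Pt[simp]: "finite (Pt n E i)"
  by (rule finite_subset[of _ "{..<n} \<times> {..<n}"]) (auto simp: Pt_def)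

lemma dg_nb: "dg n E i = real (card (nb n E i))" unfolding dg_def degree_def nb_def ..

lemma tv_card: "tv n E i = real (card (Pt n E i))"
proof -
  have "tv n E i = (\<Sum>p\<in>{..<n} \<times> {..<n}. if E i (fst p) \<and> E (fst p) (snd p) \<and> E (snd p) i then 1 else 0)"
    unfolding tv_def by (simp add: sum.cartesian_product case_prod_beta)
  also have "\<dots> = (\<Sum>p\<in>{p\<in>{..<n} \<times> {..<n}. E i (fst p) \<and> E (fst p) (snd p) \<and> E (snd p) i}. 1)"
    using sum.inter_filter[of "{..<n} \<times> {..<n}" "\<lambda>_. 1::real"] by simp
  also have "{p\<in>{..<n} \<times> {..<n}. E i (fst p) \<and> E (fst p) (snd p) \<and> E (snd p) i} = Pt n E i"
    unfolding Pt_def by auto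
  finally show ?thesis by simp
qed

lemma card_Ed: "card (Ed n E) = (\<Sum>j<n. card (nb n E j))"
proof -
  have "Ed n E = Sigma {..<n} (nb n E)" unfolding Ed_def nb_def by auto
  then show ?thesis by (simp add: card_SigmaI)
qed

lemma sum_dg_Ed: "(\<Sum>j<n. dg n E j) = real (card (Ed n E))"
  by (simp add: card_Ed dg_nb)

lemma card_offdiag:
  fixes N :: "nat set" assumes "finite N"
  shows "card ((N \<times> N) - {p. fst p = snd p}) = card N * card N - card N"
proof -
  have "(N \<times> N) \<inter> {p. fst p = snd p} = (\<lambda>x. (x,x)) ` N" by auto
  moreover have "card ((\<lambda>x. (x,x)) ` N) = card N" by (rule card_image) (auto simp: inj_on_def)
  ultimately have "card ((N \<times> N) \<inter> {p. fst p = snd p}) = card N" by simp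
  moreover have "card ((N \<times> N) - {p. fst p = snd p}) = card (N \<times> N) - card ((N \<times> N) \<inter> {p. fst p = snd p})"
    using assms by (intro card_Diff_subset_Int) auto
  ultimately show ?thesis by (simp add: card_cartesian_product)
qed

context
  fixes n E assumes G: "simple_graph n E"
begin

lemma Eprop: "E i j \<Longrightarrow> i < n \<and> j < n \<and> i \<noteq> j \<and> E j i"
  using G unfolding simple_graph_def by blast

lemma Erng: "E i j \<Longrightarrow> i < n \<and> j < n \<and> i \<noteq> j"
  using Eprop by blast

lemma F1: "tv n E i \<le> dg n E i * (dg n E i - 1)"
proof -
  let ?N = "nb n E i"
  have "Pt n E i \<subseteq> (?N \<times> ?N) - {p. fst p = snd p}"
    unfolding Pt_def nb_def using Eprop by auto
  then have "card (Pt n E i) \<le> card ?N * card ?N - card ?N"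
    using card_mono[of "(?N \<times> ?N) - {p. fst p = snd p}"] card_offdiag[of ?N] by (simp add: finite_Diff)
  moreover have "card ?N \<le> card ?N * card ?N" by (cases "card ?N") auto
  ultimately show ?thesis unfolding tv_card dg_nb
  proof -
    assume h1: "card (Pt n E i) \<le> card ?N * card ?N - card ?N" and h2: "card ?N \<le> card ?N * card ?N"
    have "real (card (Pt n E i)) \<le> real (card ?N * card ?N - card ?N)" using h1 by linarith
    also have "\<dots> = real (card ?N) * real (card ?N) - real (card ?N)" using h2 by (simp add: of_nat_diff)
    finally show "real (card (Pt n E i)) \<le> real (card ?N) * (real (card ?N) - 1)" by (simp add: algebra_simps)
  qed
qed

lemma card_excl:
  assumes "X \<subseteq> Ed n E" "X \<inter> Pt n E i = {}"
  shows "card (Pt n E i) + card X \<le> card (Ed n E)"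
proof -
  have "Pt n E i \<subseteq> Ed n E" unfolding Pt_def Ed_def by auto
  then have "Pt n E i \<union> X \<subseteq> Ed n E" using assms by auto
  then have "card (Pt n E i \<union> X) \<le> card (Ed n E)" by (rule card_mono[OF fin_Ed])
  moreover have "card (Pt n E i \<union> X) = card (Pt n E i) + card X"
    using assms by (intro card_Un_disjoint) (auto intro: finite_subset[OF _ fin_Ed])
  ultimately show ?thesis by simp
qed

lemma F2: "tv n E i \<le> (\<Sum>j<n. dg n E j) - 2 * dg n E i"
proof -
  let ?N = "nb n E i"
  let ?X = "({i} \<times> ?N) \<union> (?N \<times> {i})"
  have X: "?X \<subseteq> Ed n E" unfolding nb_def Ed_def using Eprop by auto
  have XP: "?X \<inter> Pt n E i = {}" unfolding nb_def Pt_def using Eprop by auto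
  have "card ?X = card ?N + card ?N"
    by (subst card_Un_disjoint) (auto simp: card_cartesian_product nb_def dest: Eprop)
  with card_excl[OF X XP] have "card (Pt n E i) + (card ?N + card ?N) \<le> card (Ed n E)" by simp
  then have "real (card (Pt n E i) + (card ?N + card ?N)) \<le> real (card (Ed n E))" by (simp only: of_nat_le_iff)
  then show ?thesis unfolding sum_dg_Ed unfolding tv_card dg_nb by simp
qed

lemma F4a: assumes u: "nb n E u = {w}"
  shows "tv n E w \<le> (dg n E w - 1) * (dg n E w - 2)"
proof -
  let ?N = "nb n E w - {u}"
  have uw: "u \<in> nb n E w" using u unfolding nb_def using Eprop by auto
  have "Pt n E w \<subseteq> (?N \<times> ?N) - {p. fst p = snd p}"
  proof
    fix p assume p: "p \<in> Pt n E w"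
    obtain j l where pjl: "p = (j,l)" by (cases p)
    have "j \<noteq> u"
    proof
      assume "j = u"
      then have "E u l" "E w u" using p pjl unfolding Pt_def by auto
      then have "E u l" "E u w" using Eprop by blast+
      then have "l = w" using u unfolding nb_def using Eprop by blast
      then show False using p pjl Eprop unfolding Pt_def by auto
    qed
    moreover have "l \<noteq> u"
    proof
      assume "l = u"
      then have "E u j" using p pjl Eprop unfolding Pt_def by auto
      then have "j = w" using u unfolding nb_def using Eprop by blast
      then show False using p pjl Eprop unfolding Pt_def by auto
    qed
    ultimately show "p \<in> (?N \<times> ?N) - {p. fst p = snd p}"
      using p pjl Eprop unfolding Pt_def nb_def by auto
  qed
  then have "card (Pt n E w) \<le> card ?N * card ?N - card ?N"
    using card_mono[of "(?N \<times> ?N) - {p. fst p = snd p}"] card_offdiag[of ?N] by (simp add: finite_Diff)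
  moreover have "card ?N = card (nb n E w) - 1" using uw by simp
  moreover have "card (nb n E w) \<ge> 1" using uw card_0_eq[OF fin_nb] by fastforce
  moreover have "card ?N \<le> card ?N * card ?N" by (cases "card ?N") auto
  ultimately show ?thesis unfolding tv_card dg_nb
  proof -
    assume h1: "card (Pt n E w) \<le> card ?N * card ?N - card ?N" and h2: "card ?N \<le> card ?N * card ?N"
      and h3: "card ?N = card (nb n E w) - 1" and h4: "card (nb n E w) \<ge> 1"
    have "real (card (Pt n E w)) \<le> real (card ?N * card ?N - card ?N)" using h1 by linarith
    also have "\<dots> = real (card ?N) * real (card ?N) - real (card ?N)" using h2 by (simp add: of_nat_diff)
    also have "real (card ?N) = real (card (nb n E w)) - 1" using h3 h4 by (simp add: of_nat_diff)
    finally show "real (card (Pt n E w)) \<le> (real (card (nb n E w)) - 1) * (real (card (nb n E w)) - 2)"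
      by (simp add: algebra_simps)
  qed
qed

lemma F4b: assumes u: "nb n E u = {w}" and iu: "i \<noteq> u" and iw: "i \<noteq> w"
  shows "tv n E i \<le> (\<Sum>j<n. dg n E j) - 2 * dg n E i - 2"
proof -
  let ?N = "nb n E i"
  have Euw: "E u w" "u < n" "w < n" "u \<noteq> w" using u Eprop unfolding nb_def by blast+
  then have Ewu: "E w u" using Eprop by blast
  let ?X = "({i} \<times> ?N) \<union> (?N \<times> {i}) \<union> {(u,w),(w,u)}"
  have X: "?X \<subseteq> Ed n E" unfolding nb_def Ed_def using Erng Euw Ewu Eprop by auto
  have XP: "?X \<inter> Pt n E i = {}"
  proof -
    have "(u,w) \<notin> Pt n E i"
    proof
      assume "(u,w) \<in> Pt n E i"
      then have "E u i" "i < n" unfolding Pt_def using Eprop by auto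
      then have "i \<in> nb n E u" unfolding nb_def by auto
      then show False using u iw by auto
    qed
    moreover have "(w,u) \<notin> Pt n E i"
    proof
      assume "(w,u) \<in> Pt n E i"
      then have "E u i" "i < n" unfolding Pt_def using Eprop by auto
      then have "i \<in> nb n E u" unfolding nb_def by auto
      then show False using u iw by auto
    qed
    ultimately show ?thesis unfolding nb_def Pt_def using Erng by auto
  qed
  have c1: "card (({i} \<times> ?N) \<union> (?N \<times> {i})) = card ?N + card ?N"
    by (subst card_Un_disjoint) (auto simp: card_cartesian_product nb_def dest: Erng)
  have "card ?X = card (({i} \<times> ?N) \<union> (?N \<times> {i})) + card {(u,w),(w,u)}"
    by (rule card_Un_disjoint) (use iu iw in auto)
  also have "card {(u,w),(w,u)} = 2" using Euw by auto
  finally have "card ?X = card ?N + card ?N + 2" using c1 by simp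
  with card_excl[OF X XP] have "card (Pt n E i) + (card ?N + card ?N + 2) \<le> card (Ed n E)" by simp
  then have "real (card (Pt n E i) + (card ?N + card ?N + 2)) \<le> real (card (Ed n E))" by (simp only: of_nat_le_iff)
  then show ?thesis unfolding sum_dg_Ed unfolding tv_card dg_nb by simp
qed

lemma F3: assumes "i < n" shows "dg n E i \<le> real n - 1"
proof -
  have "nb n E i \<subseteq> {..<n} - {i}" unfolding nb_def using Eprop by auto
  then have "card (nb n E i) \<le> card ({..<n} - {i})" by (rule card_mono[rotated]) auto
  also have "\<dots> = n - 1" using assms by simp
  finally show ?thesis unfolding dg_nb using assms by linarith
qed

end



context
  fixes k n :: nat and X :: "nat \<Rightarrow> real"
  assumes n: "n = 2*k+1"
    and S1: "(\<Sum>i<n. X i) = 6*real k"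
    and S2: "(\<Sum>i<n. X i ^ 2) = 4*real k^2 + 8*real k"
begin

lemma sq_sum: "(\<Sum>i<n. (X i - 2)^2) = (2*real k - 2)^2"
proof -
  have "(\<Sum>i<n. (X i - 2)^2) = (\<Sum>i<n. X i ^ 2 - 4 * X i + 4)"
    by (intro sum.cong refl) (simp add: power2_eq_square algebra_simps)
  also have "\<dots> = (\<Sum>i<n. X i ^ 2) - (\<Sum>i<n. 4 * X i) + 4 * real n"
    by (simp add: sum.distrib sum_subtractf)
  also have "(\<Sum>i<n. 4 * X i) = 4 * (\<Sum>i<n. X i)" by (rule sum_distrib_left[symmetric])
  also have "real n = 2*real k + 1" using n by simp
  finally show ?thesis unfolding S1 S2 by (simp add: power2_eq_square algebra_simps)
qed

lemma b_sum: "(\<Sum>i<n. (X i - 2)^2 * (2*real k - X i) + X i) = 8*real k^3 + 22*real k - (\<Sum>i<n. X i ^ 3)"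
proof -
  have "(\<Sum>i<n. (X i - 2)^2 * (2*real k - X i) + X i)
      = (\<Sum>i<n. (2*real k+4) * X i ^ 2 - X i ^ 3 - (8*real k+3) * X i + 8*real k)"
    by (intro sum.cong refl) (simp add: power2_eq_square power3_eq_cube algebra_simps)
  also have "\<dots> = (\<Sum>i<n. (2*real k+4) * X i ^ 2) - (\<Sum>i<n. X i ^ 3) - (\<Sum>i<n. (8*real k+3) * X i) + 8*real k*n"
    by (simp add: sum.distrib sum_subtractf)
  also have "(\<Sum>i<n. (2*real k+4) * X i ^ 2) = (2*real k+4) * (\<Sum>i<n. X i ^ 2)" by (rule sum_distrib_left[symmetric])
  also have "(\<Sum>i<n. (8*real k+3) * X i) = (8*real k+3) * (\<Sum>i<n. X i)" by (rule sum_distrib_left[symmetric])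
  also have "real n = 2*real k + 1" using n by simp
  finally show ?thesis unfolding S1 S2 by (simp add: power2_eq_square power3_eq_cube algebra_simps)
qed

lemma caseA:
  assumes c: "c < n" "X c = 2*real k"
  shows "\<forall>i<n. i \<noteq> c \<longrightarrow> X i = 2"
proof -
  have "(\<Sum>i<n. (X i - 2)^2) = (X c - 2)^2 + (\<Sum>i\<in>{..<n}-{c}. (X i - 2)^2)"
    using c by (subst sum.remove[of _ c]) auto
  then have "(\<Sum>i\<in>{..<n}-{c}. (X i - 2)^2) = 0" using sq_sum c by (simp add: algebra_simps)
  then have "\<forall>i\<in>{..<n}-{c}. (X i - 2)^2 = 0"
    by (subst sum_nonneg_eq_0_iff[symmetric]) auto
  then show ?thesis by auto
qed

lemma caseB_S3:
  assumes k: "k \<ge> 2" and le: "\<forall>i<n. X i \<le> 2*real k - 1"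
  shows "(\<Sum>i<n. X i ^ 3) < 8*real k^3 + 16*real k"
proof -
  have "(\<Sum>i<n. (X i - 2)^2) \<le> (\<Sum>i<n. (X i - 2)^2 * (2*real k - X i))"
  proof (rule sum_mono)
    fix i assume "i \<in> {..<n}"
    then have "1 \<le> 2*real k - X i" using le by auto
    then show "(X i - 2)^2 \<le> (X i - 2)^2 * (2*real k - X i)"
      using mult_left_mono[of 1 "2*real k - X i" "(X i - 2)^2"] by simp
  qed
  also have "(\<Sum>i<n. (X i - 2)^2 * (2*real k - X i)) = (\<Sum>i<n. (X i - 2)^2 * (2*real k - X i) + X i) - (\<Sum>i<n. X i)"
    by (simp add: sum.distrib)
  also have "\<dots> = 8*real k^3 + 16*real k - (\<Sum>i<n. X i ^ 3)" using b_sum S1 by simp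
  finally have "(2*real k - 2)^2 \<le> 8*real k^3 + 16*real k - (\<Sum>i<n. X i ^ 3)" using sq_sum by simp
  moreover have "0 < (2*real k - 2)^2" using k by simp
  ultimately show ?thesis by linarith
qed

end

lemma pv3:
  fixes x :: nat and k :: nat and t :: real
  assumes k: "k \<ge> 3" and x: "x \<le> 2*k - 1"
    and t1: "t \<le> real x * (real x - 1)" and t2: "t \<le> 6*real k - 2*real x"
  shows "t \<le> (real x - 2)^2 * (2*real k - real x) + real x"
proof (cases "x = 2*k - 1")
  case True
  then have xr: "real x = 2*real k - 1" using k by (simp add: of_nat_diff)
  have "(2*real k - 3)^2 \<ge> 3"
  proof -
    have "2*real k - 3 \<ge> 3" using k by simp
    then have "(2*real k - 3)^2 \<ge> 3^2" by (rule power_mono) simp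
    then show ?thesis by simp
  qed
  have "(real x - 2)^2 * (2*real k - real x) + real x = (2*real k - 3)^2 + 2*real k - 1" using xr by simp
  then show ?thesis using t2 xr \<open>(2*real k - 3)^2 \<ge> 3\<close> by linarith
next
  case False
  then have x2: "real x \<le> 2*real k - 2" using x k by linarith
  show ?thesis
  proof (cases "x = 3")
    case True
    have "real k \<ge> 3" using k by simp
    then show ?thesis using t1 True by (simp add: power2_eq_square)
  next
    case False
    have "(real x - 2)^2 * 2 \<le> (real x - 2)^2 * (2*real k - real x)"
      using x2 by (intro mult_left_mono) auto
    moreover have "real x * (real x - 1) \<le> (real x - 2)^2 * 2 + real x"
    proof -
      have "0 \<le> (real x - 2) * (real x - 4)"
      proof (cases "x \<le> 2")
        case True then show ?thesis by (intro mult_nonpos_nonpos) auto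
      next
        case False then have "x \<ge> 4" using \<open>x \<noteq> 3\<close> by simp
        then show ?thesis by (intro mult_nonneg_nonneg) auto
      qed
      then show ?thesis by (simp add: power2_eq_square algebra_simps)
    qed
    ultimately show ?thesis using t1 by linarith
  qed
qed



lemma nat_le3_cases: "(x::nat) \<le> 3 \<Longrightarrow> x = 0 \<or> x = 1 \<or> x = 2 \<or> x = 3" by auto

lemma Tbound:
  assumes G: "simple_graph n E" and n: "n = 2*k+1" and k: "k \<ge> 2"
    and S1: "(\<Sum>i<n. dg n E i) = 6*real k"
    and S2: "(\<Sum>i<n. dg n E i ^ 2) = 4*real k^2 + 8*real k"
    and le: "\<forall>i<n. dg n E i \<le> 2*real k - 1"
  shows "tri n E \<le> 8*real k^3 + 22*real k - (\<Sum>i<n. dg n E i ^ 3)"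
proof -
  let ?x = "\<lambda>i. card (nb n E i)"
  let ?b = "\<lambda>i. (real (?x i) - 2)^2 * (2*real k - real (?x i)) + real (?x i)"
  have dgx: "\<And>i. dg n E i = real (?x i)" by (rule dg_nb)
  have bsum: "(\<Sum>i<n. ?b i) = 8*real k^3 + 22*real k - (\<Sum>i<n. dg n E i ^ 3)"
    using b_sum[OF n, of "dg n E"] S1 S2 unfolding dgx by simp
  have t1: "\<And>i. tv n E i \<le> real (?x i) * (real (?x i) - 1)" using F1[OF G] unfolding dgx .
  have t2: "\<And>i. tv n E i \<le> 6*real k - 2*real (?x i)" using F2[OF G] S1 unfolding dgx by simp
  have t0: "\<And>i. 0 \<le> tv n E i" unfolding tv_card by simp
  have xle: "\<And>i. i < n \<Longrightarrow> real (?x i) \<le> 2*real k - 1" using le unfolding dgx by simp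
  show ?thesis
  proof (cases "k \<ge> 3")
    case True
    have "tri n E = (\<Sum>i<n. tv n E i)" by (rule tri_tv)
    also have "\<dots> \<le> (\<Sum>i<n. ?b i)"
    proof (rule sum_mono)
      fix i assume i: "i \<in> {..<n}"
      have r: "real (?x i + 1) \<le> real (2*k)" using xle[of i] i by simp
      then have "?x i + 1 \<le> 2*k" by (simp only: of_nat_le_iff)
      then have "?x i \<le> 2*k - 1" by simp
      then show "tv n E i \<le> ?b i" by (rule pv3[OF True _ t1 t2])
    qed
    finally show ?thesis using bsum by simp
  next
    case False
    then have k2: "k = 2" using k by simp
    have x3: "\<And>i. i < n \<Longrightarrow> ?x i \<le> 3" using xle k2 by fastforce
    have "\<exists>u<n. ?x u \<le> 1"
    proof (rule ccontr)
      assume "\<not> (\<exists>u<n. ?x u \<le> 1)"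
      then have h: "\<And>i. i < n \<Longrightarrow> (real (?x i) - 2) * (real (?x i) - 3) = 0"
      proof -
        fix i assume "\<not> (\<exists>u<n. ?x u \<le> 1)" "i < n"
        then have "?x i = 2 \<or> ?x i = 3" using x3[of i] by fastforce
        then show "(real (?x i) - 2) * (real (?x i) - 3) = 0" by auto
      qed
      have "(\<Sum>i<n. (real (?x i) - 2) * (real (?x i) - 3)) = (\<Sum>i<n. real (?x i) ^ 2 - 5 * real (?x i) + 6)"
        by (intro sum.cong refl) (simp add: power2_eq_square algebra_simps)
      also have "\<dots> = (\<Sum>i<n. real (?x i) ^ 2) - (\<Sum>i<n. 5 * real (?x i)) + 6 * real n"
        by (simp add: sum.distrib sum_subtractf)
      also have "(\<Sum>i<n. 5 * real (?x i)) = 5 * (\<Sum>i<n. real (?x i))" by (rule sum_distrib_left[symmetric])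
      finally have "(\<Sum>i<n. (real (?x i) - 2) * (real (?x i) - 3)) = 2"
        using S1 S2 k2 n unfolding dgx by simp
      moreover have "(\<Sum>i<n. (real (?x i) - 2) * (real (?x i) - 3)) = 0"
        by (rule sum.neutral) (use h in blast)
      ultimately show False by simp
    qed
    then obtain u where u: "u < n" "?x u \<le> 1" by blast
    have bk: "\<And>i. ?b i = (real (?x i) - 2)^2 * (4 - real (?x i)) + real (?x i)" using k2 by simp
    show ?thesis
    proof (cases "?x u = 0")
      case True
      have "tri n E = (\<Sum>i<n. tv n E i)" by (rule tri_tv)
      also have "\<dots> \<le> (\<Sum>i<n. ?b i + 2 - (if i = u then 18 else 0))"
      proof (rule sum_mono)
        fix i assume i: "i \<in> {..<n}"
        show "tv n E i \<le> ?b i + 2 - (if i = u then 18 else 0)"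
        proof (cases "i = u")
          case True
          then show ?thesis using t1[of i] \<open>?x u = 0\<close> bk[of i] by simp
        next
          case False
          have "?x i \<le> 3" using x3 i by simp
          then show ?thesis using nat_le3_cases[of "?x i"] t1[of i] bk[of i] False
            by (auto simp: power2_eq_square)
        qed
      qed
      also have "\<dots> = (\<Sum>i<n. ?b i) + 2 * real n - 18"
        using u by (simp add: sum.distrib sum_subtractf sum.delta)
      finally show ?thesis using bsum n k2 by simp
    next
      case False
      then have "?x u = 1" using u(2) by arith
      then obtain w where w: "nb n E u = {w}" by (metis card_1_singletonE)
      have "tri n E = (\<Sum>i<n. tv n E i)" by (rule tri_tv)
      also have "\<dots> \<le> (\<Sum>i<n. ?b i)"
      proof (rule sum_mono)
        fix i assume i: "i \<in> {..<n}"
        have xi: "?x i \<le> 3" using x3 i by simp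
        show "tv n E i \<le> ?b i"
        proof (cases "i = u")
          case True
          then show ?thesis using t1[of i] \<open>?x u = 1\<close> bk[of i] by simp
        next
          case iu: False
          show ?thesis
          proof (cases "i = w")
            case True
            have "tv n E w \<le> (real (?x w) - 1) * (real (?x w) - 2)" using F4a[OF G w] unfolding dgx .
            then show ?thesis using nat_le3_cases[OF xi] bk[of i] True
              by (auto simp: power2_eq_square)
          next
            case False
            have "tv n E i \<le> 6 * real k - 2 * real (?x i) - 2" using F4b[OF G w iu False] S1 unfolding dgx by simp
            then show ?thesis using nat_le3_cases[OF xi] t1[of i] bk[of i] k2
              by (auto simp: power2_eq_square)
          qed
        qed
      qed
      finally show ?thesis using bsum by simp
    qed
  qed
qed


lemma degree_struct:
  fixes al :: real
  assumes G: "simple_graph n E" and n: "n = 2*k+1" and k: "k \<ge> 1"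
    and a1: "1/2 < al" and a2: "al < 1"
    and S1: "(\<Sum>i<n. dg n E i) = 6*real k"
    and S2: "(\<Sum>i<n. dg n E i ^ 2) = 4*real k^2 + 8*real k"
    and eq3: "al^3 * (\<Sum>i<n. dg n E i ^ 3) + (1-al)^3 * tri n E = al^3 * (8*real k^3 + 16*real k) + (1-al)^3 * (6*real k)"
  shows "\<exists>c<n. dg n E c = 2*real k \<and> (\<forall>i<n. i \<noteq> c \<longrightarrow> dg n E i = 2)"
proof (rule ccontr)
  assume H: "\<not> ?thesis"
  have le: "\<forall>i<n. dg n E i \<le> 2*real k - 1"
  proof (intro allI impI)
    fix i assume i: "i < n"
    have "dg n E i \<le> real n - 1" by (rule F3[OF G i])
    then have c1: "card (nb n E i) \<le> 2*k" using n unfolding dg_nb by simp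
    have "dg n E i \<noteq> 2*real k"
    proof
      assume "dg n E i = 2*real k"
      then have "\<forall>j<n. j \<noteq> i \<longrightarrow> dg n E j = 2" by (rule caseA[OF n S1 S2 i])
      then show False using H i \<open>dg n E i = 2*real k\<close> by blast
    qed
    then have "card (nb n E i) \<noteq> 2*k" unfolding dg_nb by simp
    with c1 have "card (nb n E i) + 1 \<le> 2*k" by simp
    then have "real (card (nb n E i) + 1) \<le> real (2*k)" by (simp only: of_nat_le_iff)
    then show "dg n E i \<le> 2*real k - 1" unfolding dg_nb by simp
  qed
  show False
  proof (cases "k = 1")
    case True
    have "(\<Sum>i<n. dg n E i) \<le> (\<Sum>i<n. 1)" using le True by (intro sum_mono) simp
    then show False using S1 True n by simp
  next
    case False
    then have k2: "k \<ge> 2" using k by simp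
    have S3: "(\<Sum>i<n. dg n E i ^ 3) < 8*real k^3 + 16*real k" by (rule caseB_S3[OF n S1 S2 k2 le])
    have T: "tri n E \<le> 8*real k^3 + 22*real k - (\<Sum>i<n. dg n E i ^ 3)" by (rule Tbound[OF G n k2 S1 S2 le])
    define D where "D = 8*real k^3 + 16*real k - (\<Sum>i<n. dg n E i ^ 3)"
    have D: "D > 0" using S3 unfolding D_def by simp
    have "(1-al)^3 * (tri n E - 6*real k) = al^3 * D" using eq3 unfolding D_def by (simp add: algebra_simps)
    moreover have "tri n E - 6*real k \<le> D" using T unfolding D_def by simp
    moreover have "0 \<le> (1-al)^3" using a2 by simp
    ultimately have "al^3 * D \<le> (1-al)^3 * D" by (metis mult_left_mono mult.commute)
    then have "al^3 \<le> (1-al)^3" using D by simp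
    moreover have "(1-al)^3 < al^3" using a1 a2 by (intro power_strict_mono) auto
    ultimately show False by simp
  qed
qed



lemma match_iso:
  assumes "finite X" "finite Y" "card X = card Y"
    and p: "\<forall>x\<in>X. p x \<in> X \<and> p x \<noteq> x \<and> p (p x) = x"
    and q: "\<forall>y\<in>Y. q y \<in> Y \<and> q y \<noteq> y \<and> q (q y) = y"
  shows "\<exists>g. bij_betw g X Y \<and> (\<forall>x\<in>X. g (p x) = q (g x))"
  using assms
proof (induction "card X" arbitrary: X Y rule: less_induct)
  case less
  show ?case
  proof (cases "X = {}")
    case True
    then have "Y = {}" using less by simp
    then show ?thesis using True by (auto simp: bij_betw_def)
  next
    case False
    then obtain x where x: "x \<in> X" by blast
    have "Y \<noteq> {}" using less False by auto
    then obtain y where y: "y \<in> Y" by blast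
    let ?X' = "X - {x, p x}" and ?Y' = "Y - {y, q y}"
    have px: "p x \<in> X" "p x \<noteq> x" "p (p x) = x" using less.prems(4) x by auto
    have qy: "q y \<in> Y" "q y \<noteq> y" "q (q y) = y" using less.prems(5) y by auto
    have cX: "card ?X' = card X - 2" using px x less.prems(1) by (simp add: card_Diff_subset)
    have cY: "card ?Y' = card Y - 2" using qy y less.prems(2) by (simp add: card_Diff_subset)
    have "card X > 0" using x less.prems(1) card_gt_0_iff by blast
    then have lt: "card ?X' < card X" using cX by simp
    have p': "\<forall>z\<in>?X'. p z \<in> ?X' \<and> p z \<noteq> z \<and> p (p z) = z"
    proof
      fix z assume z: "z \<in> ?X'"
      then have zX: "z \<in> X" "z \<noteq> x" "z \<noteq> p x" by auto
      have "p z \<in> X" "p z \<noteq> z" "p (p z) = z" using less.prems(4) zX(1) by auto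
      moreover have "p z \<noteq> x"
      proof
        assume "p z = x" then have "p (p z) = p x" by simp
        then show False using \<open>p (p z) = z\<close> zX(3) by simp
      qed
      moreover have "p z \<noteq> p x"
      proof
        assume "p z = p x" then have "p (p z) = p (p x)" by simp
        then show False using \<open>p (p z) = z\<close> px(3) zX(2) by simp
      qed
      ultimately show "p z \<in> ?X' \<and> p z \<noteq> z \<and> p (p z) = z" by simp
    qed
    have q': "\<forall>z\<in>?Y'. q z \<in> ?Y' \<and> q z \<noteq> z \<and> q (q z) = z"
    proof
      fix z assume z: "z \<in> ?Y'"
      then have zX: "z \<in> Y" "z \<noteq> y" "z \<noteq> q y" by auto
      have "q z \<in> Y" "q z \<noteq> z" "q (q z) = z" using less.prems(5) zX(1) by auto
      moreover have "q z \<noteq> y"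
      proof
        assume "q z = y" then have "q (q z) = q y" by simp
        then show False using \<open>q (q z) = z\<close> zX(3) by simp
      qed
      moreover have "q z \<noteq> q y"
      proof
        assume "q z = q y" then have "q (q z) = q (q y)" by simp
        then show False using \<open>q (q z) = z\<close> qy(3) zX(2) by simp
      qed
      ultimately show "q z \<in> ?Y' \<and> q z \<noteq> z \<and> q (q z) = z" by simp
    qed
    have fX': "finite ?X'" "finite ?Y'" using less.prems by auto
    have cc: "card ?X' = card ?Y'" using cX cY less.prems(3) by simp
    obtain g' where g': "bij_betw g' ?X' ?Y'" "\<forall>z\<in>?X'. g' (p z) = q (g' z)"
      using less.hyps[OF lt fX'(1) fX'(2) cc p' q'] by blast
    define g where "g z = (if z = x then y else if z = p x then q y else g' z)" for z
    have "bij_betw g ?X' ?Y' = bij_betw g' ?X' ?Y'" by (rule bij_betw_cong) (auto simp: g_def)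
    then have b1: "bij_betw g ?X' ?Y'" using g'(1) by simp
    have b2: "bij_betw g {x, p x} {y, q y}" using px qy by (auto simp: bij_betw_def g_def inj_on_def)
    have "bij_betw g (?X' \<union> {x, p x}) (?Y' \<union> {y, q y})"
      by (rule bij_betw_combine[OF b1 b2]) auto
    moreover have "?X' \<union> {x, p x} = X" "?Y' \<union> {y, q y} = Y" using x px y qy by auto
    ultimately have bij: "bij_betw g X Y" by simp
    have "\<forall>z\<in>X. g (p z) = q (g z)"
    proof
      fix z assume z: "z \<in> X"
      show "g (p z) = q (g z)"
      proof (cases "z = x \<or> z = p x")
        case True
        then show ?thesis using px qy by (auto simp: g_def)
      next
        case False
        then have zX': "z \<in> ?X'" using z by simp
        then have "p z \<in> ?X'" using p' by blast
        then show ?thesis using zX' g'(2) by (auto simp: g_def)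
      qed
    qed
    with bij show ?thesis by blast
  qed
qed


lemma struct_iso:
  assumes G: "simple_graph n E" and n: "n = 2*k+1" and c: "c < n" and dc: "dg n E c = 2*real k"
    and dv: "\<forall>i<n. i \<noteq> c \<longrightarrow> dg n E i = 2"
  shows "graph_iso n E (2*k+1) (friendship k)"
proof -
  let ?X = "{..<n} - {c}"
  let ?Y = "{1..2*k}"
  have nbc: "nb n E c = ?X"
  proof (rule card_subset_eq)
    show "finite ?X" by simp
    show "nb n E c \<subseteq> ?X" unfolding nb_def using Erng[OF G] by auto
    show "card (nb n E c) = card ?X" using dc c n unfolding dg_nb by simp
  qed
  have adjc: "\<And>v. v < n \<Longrightarrow> v \<noteq> c \<Longrightarrow> E c v \<and> E v c"
    using nbc Eprop[OF G] unfolding nb_def by blast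
  have ex: "\<exists>w. w \<noteq> c \<and> nb n E v = {c, w}" if v: "v < n" "v \<noteq> c" for v
  proof -
    have cv: "c \<in> nb n E v" using adjc[OF v] c unfolding nb_def by auto
    have "card (nb n E v) = 2" using dv v unfolding dg_nb by simp
    then have "card (nb n E v - {c}) = 1" using cv by simp
    then obtain w where w: "nb n E v - {c} = {w}" by (metis card_1_singletonE)
    then have "w \<noteq> c" "nb n E v = {c, w}" using cv by auto
    then show ?thesis by blast
  qed
  define p where "p v = (SOME w. w \<noteq> c \<and> nb n E v = {c, w})" for v
  have pv: "p v \<noteq> c \<and> nb n E v = {c, p v}" if "v < n" "v \<noteq> c" for v
    unfolding p_def by (rule someI_ex[OF ex[OF that]])
  have Eiff: "E v j \<longleftrightarrow> (j = c \<or> j = p v)" if "v < n" "v \<noteq> c" for v j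
  proof -
    have "E v j \<longleftrightarrow> j \<in> nb n E v" unfolding nb_def using Erng[OF G] by auto
    then show ?thesis using pv[OF that] by auto
  qed
  have pX: "\<forall>x\<in>?X. p x \<in> ?X \<and> p x \<noteq> x \<and> p (p x) = x"
  proof
    fix v assume v: "v \<in> ?X"
    then have v': "v < n" "v \<noteq> c" by auto
    have Evp: "E v (p v)" using Eiff[OF v'] by simp
    then have "p v < n" "p v \<noteq> v" using Erng[OF G, of v "p v"] by auto
    moreover have "p v \<noteq> c" using pv[OF v'] by simp
    moreover have "p (p v) = v"
    proof -
      have "E (p v) v" using Evp Eprop[OF G] by blast
      then have "v = c \<or> v = p (p v)" using Eiff[OF \<open>p v < n\<close> \<open>p v \<noteq> c\<close>] by simp
      then show ?thesis using v' by simp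
    qed
    ultimately show "p v \<in> ?X \<and> p v \<noteq> v \<and> p (p v) = v" by simp
  qed
  have qY: "\<forall>y\<in>?Y. pt y \<in> ?Y \<and> pt y \<noteq> y \<and> pt (pt y) = y"
    using pt_range by auto
  have cXY: "card ?X = card ?Y" using c n by simp
  obtain g where g: "bij_betw g ?X ?Y" "\<forall>x\<in>?X. g (p x) = pt (g x)"
    using match_iso[OF _ _ cXY pX qY] by auto
  define f where "f z = (if z = c then 0 else g z)" for z
  have "bij_betw f ?X ?Y = bij_betw g ?X ?Y" by (rule bij_betw_cong) (auto simp: f_def)
  then have b1: "bij_betw f ?X ?Y" using g(1) by simp
  have b2: "bij_betw f {c} {0}" by (auto simp: f_def bij_betw_def)
  have "bij_betw f (?X \<union> {c}) (?Y \<union> {0})" by (rule bij_betw_combine[OF b1 b2]) auto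
  moreover have "?X \<union> {c} = {0..<n}" using c by auto
  moreover have "?Y \<union> {0} = {0..<2*k+1}" by auto
  ultimately have bij: "bij_betw f {0..<n} {0..<2*k+1}" by simp
  have gY: "\<And>x. x \<in> ?X \<Longrightarrow> g x \<in> ?Y" using g(1) by (auto simp: bij_betw_def)
  have adj: "E i j \<longleftrightarrow> friendship k (f i) (f j)" if i: "i < n" and j: "j < n" for i j
  proof (cases "i = c")
    case True
    show ?thesis
    proof (cases "j = c")
      case True
      have "\<not> E c c"
      proof
        assume "E c c" then show False using Erng[OF G, of c c] by simp
      qed
      then show ?thesis using \<open>i = c\<close> True by (simp add: f_def fr_iff)
    next
      case False
      then have "g j \<in> ?Y" using gY j by simp
      then show ?thesis using \<open>i = c\<close> False adjc[OF j False] by (simp add: f_def fr_iff)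
    qed
  next
    case False
    note ic = False
    have gi: "g i \<in> ?Y" using gY i ic by simp
    show ?thesis
    proof (cases "j = c")
      case True
      then show ?thesis using ic gi adjc[OF i ic] by (simp add: f_def fr_iff)
    next
      case False
      have gj: "g j \<in> ?Y" using gY j False by simp
      have "E i j \<longleftrightarrow> j = p i" using Eiff[OF i ic] False by simp
      also have "\<dots> \<longleftrightarrow> g j = g (p i)"
      proof
        show "j = p i \<Longrightarrow> g j = g (p i)" by simp
        assume "g j = g (p i)"
        moreover have "p i \<in> ?X" using pX i ic by blast
        moreover have "j \<in> ?X" using j False by simp
        ultimately show "j = p i" using g(1) unfolding bij_betw_def inj_on_def by blast
      qed
      also have "g (p i) = pt (g i)" using g(2) i ic by simp
      also have "(g j = pt (g i)) \<longleftrightarrow> friendship k (g i) (g j)"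
      proof -
        have a: "1 \<le> g i" "g i \<le> 2*k" "1 \<le> g j" "g j \<le> 2*k" using gi gj by auto
        have "pt (g i) \<noteq> g i" using pt_range[OF a(1) a(2)] by blast
        show ?thesis
        proof
          assume h: "g j = pt (g i)"
          have "g i < 2*k+1" "g j < 2*k+1" using a by linarith+
          moreover have "g i \<noteq> g j" using h \<open>pt (g i) \<noteq> g i\<close> by simp
          ultimately show "friendship k (g i) (g j)" unfolding fr_iff using h by blast
        next
          assume "friendship k (g i) (g j)"
          then have "g i = 0 \<or> g j = 0 \<or> g j = pt (g i)" unfolding fr_iff by blast
          then show "g j = pt (g i)" using a by linarith
        qed
      qed
      finally show ?thesis using ic False by (simp add: f_def)
    qed
  qed
  show ?thesis unfolding graph_iso_def using bij adj by blast
qed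


theorem corollary3p10:
  fixes k :: nat and \<alpha> :: real
  assumes "k \<ge> 1" and "1/2 < \<alpha>" and "\<alpha> < 1"
  shows "determined_by_A_alpha_spectrum \<alpha> (2*k+1) (friendship k)"
  unfolding determined_by_A_alpha_spectrum_def
proof (intro allI impI, elim conjE)
  fix m F
  assume G: "simple_graph m F" and sp: "A_alpha_spectrum \<alpha> m F = A_alpha_spectrum \<alpha> (2*k+1) (friendship k)"
  from cospectral_traces[OF sp] have m: "m = 2*k+1"
    and tr: "\<And>p. tr (A_alpha \<alpha> m F ^\<^sub>m p) = tr (A_alpha \<alpha> (2*k+1) (friendship k) ^\<^sub>m p)" by auto
  note gG = graph_traces[OF G, of \<alpha>]
  note gF = graph_traces[OF fr_simple[of k], of \<alpha>]
  have f1: "(\<Sum>i<2*k+1. dg (2*k+1) (friendship k) i) = 6 * real k"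
    using fr_sum_pow[of k 1] by simp
  have f2: "(\<Sum>i<2*k+1. dg (2*k+1) (friendship k) i ^ 2) = 4*real k^2 + 8*real k"
    using fr_sum_pow[of k 2] by (simp add: power2_eq_square)
  have f3: "(\<Sum>i<2*k+1. dg (2*k+1) (friendship k) i ^ 3) = 8*real k^3 + 16*real k"
    using fr_sum_pow[of k 3] by (simp add: power3_eq_cube)
  have ft: "tri (2*k+1) (friendship k) = 6 * real k" by (rule fr_tri)
  have a0: "\<alpha> \<noteq> 0" using assms by simp
  have S1: "(\<Sum>i<m. dg m F i) = 6*real k"
    using tr[of 1] gG(1) gF(1) f1 a0 by simp
  have S2: "(\<Sum>i<m. dg m F i ^ 2) = 4*real k^2 + 8*real k"
  proof -
    have "\<alpha>^2 * (\<Sum>i<m. dg m F i ^ 2) + (1-\<alpha>)^2 * (6*real k) = \<alpha>^2 * (4*real k^2 + 8*real k) + (1-\<alpha>)^2 * (6*real k)"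
      using tr[of 2] gG(2) gF(2) f1 f2 S1 by simp
    then show ?thesis using a0 by simp
  qed
  have eq3: "\<alpha>^3 * (\<Sum>i<m. dg m F i ^ 3) + (1-\<alpha>)^3 * tri m F = \<alpha>^3 * (8*real k^3 + 16*real k) + (1-\<alpha>)^3 * (6*real k)"
  proof -
    have "\<alpha>^3 * (\<Sum>i<m. dg m F i ^ 3) + 3 * \<alpha> * (1-\<alpha>)^2 * (4*real k^2 + 8*real k) + (1-\<alpha>)^3 * tri m F
        = \<alpha>^3 * (8*real k^3 + 16*real k) + 3 * \<alpha> * (1-\<alpha>)^2 * (4*real k^2 + 8*real k) + (1-\<alpha>)^3 * (6*real k)"
      using tr[of 3] gG(3) gF(3) f2 f3 ft S2 by simp
    then show ?thesis by simp
  qed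
  obtain c where c: "c < m" "dg m F c = 2*real k" "\<forall>i<m. i \<noteq> c \<longrightarrow> dg m F i = 2"
    using degree_struct[OF G m assms(1) assms(2) assms(3) S1 S2 eq3] by blast
  show "graph_iso m F (2*k+1) (friendship k)" by (rule struct_iso[OF G m c])
qed


end
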